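(* Let $d$ be an odd prime, with $\Pi^j_k$ and $\Omega$ as in the context. Every $\rho\in\Omega$ has the following properties: (a) $\rho$ is Hermitian, $\mathrm{Tr}(\rho)=1$ and $\mathrm{Tr}(\rho^2)=1$; (b) $\mathrm{Tr}(\rho\Pi^j_k)=p^j_k$ for all $j,k$; (c) $\sum_{k=0}^{d-1}(p^j_k)^2=\frac{2}{d+1}$ for every $j=0,\dots,d$, and $\sum_{k=0}^{d-1}p^j_kp^j_{k+r}=\frac{1}{d+1}$ for every $j$ and every $r=1,\dots,d-1$, with indices modulo $d$.
   Context: Let $d$ be an odd prime and $\omega=e^{2\pi i/d}$; for real $x$, $\omega^{x}$ means $e^{2\pi i x/d}$. Let $\{|k\rangle\}_{k=0}^{d-1}$ be the computational basis of $\mathbb{C}^d$, with indices taken modulo $d$. Let $X|k\rangle=|k+1\rangle$ and $Z|k\rangle=\omega^k|k\rangle$, and $\tau=-e^{i\pi/d}$. For $\mathbf p=(p_1,p_2)\in\mathbb{Z}_d^2$ set $D_{\mathbf p}=\tau^{p_1p_2}X^{p_1}Z^{p_2}$. For $j\in\{0,\dots,d-1\}$, let $\Pi^j_k$ be the rank-one projector onto the eigenvector of $D_{(1,j)}$ with eigenvalue $\omega^k$. Let $\Pi^d_k=|k\rangle\langle k|$. These $d+1$ orthonormal bases are mutually unbiased. $\Omega$ denotes the set of all operators $\rho=\sum_{j=0}^{d}\sum_{k=0}^{d-1}\big(p^j_k-\tfrac{1}{d+1}\big)\Pi^j_k$ with $p^j_k=\frac1d+\frac{1}{d\sqrt{d+1}}\sum_{r=1}^{d-1}\omega^{\alpha^j_r+kr}$,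 where the $\alpha^j_r\in\mathbb{R}$ ($j=0,\dots,d$, $r=1,\dots,d-1$) satisfy $\alpha^j_{d-r}=-\alpha^j_r$. Here $p^j_k$ refers to the numbers defining $\rho$. *)

theory Defs
  imports Complex_Main "Jordan_Normal_Form.Matrix"
begin

definition omg :: "nat \<Rightarrow> real \<Rightarrow> complex" where
  "omg d x = exp (2 * pi * \<i> * complex_of_real x / of_nat d)"

definition tau :: "nat \<Rightarrow> complex" where
  "tau d = - exp (\<i> * complex_of_real pi / of_nat d)"

definition Xop :: "nat \<Rightarrow> complex mat" where
  "Xop d = mat d d (\<lambda>(a, b). if a = (b + 1) mod d then 1 else 0)"

definition Zop :: "nat \<Rightarrow> complex mat" where
  "Zop d = mat d d (\<lambda>(a, b). if a = b then omg d (real a) else 0)"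

definition Dop :: "nat \<Rightarrow> nat \<Rightarrow> nat \<Rightarrow> complex mat" where
  "Dop d p1 p2 = (tau d ^ (p1 * p2)) \<cdot>\<^sub>m (Xop d ^\<^sub>m p1 * Zop d ^\<^sub>m p2)"

definition unit_vec_c :: "nat \<Rightarrow> complex vec \<Rightarrow> bool" where
  "unit_vec_c d v \<longleftrightarrow> v \<in> carrier_vec d \<and> (\<Sum>i<d. (cmod (v $ i))\<^sup>2) = 1"

definition outer :: "nat \<Rightarrow> complex vec \<Rightarrow> complex mat" where
  "outer d v = mat d d (\<lambda>(a, b). v $ a * cnj (v $ b))"

definition Proj :: "nat \<Rightarrow> nat \<Rightarrow> nat \<Rightarrow> complex mat" where
  "Proj d j k =
     (if j < d then
        outer d (SOME v. unit_vec_c d v \<and> Dop d 1 j *\<^sub>v v = omg d (real k) \<cdot>\<^sub>v v)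
      else outer d (unit_vec d k))"

definition mtrace :: "complex mat \<Rightarrow> complex" where
  "mtrace A = (\<Sum>i<dim_row A. A $$ (i, i))"

definition hermitian_mat :: "nat \<Rightarrow> complex mat \<Rightarrow> bool" where
  "hermitian_mat d A \<longleftrightarrow> A \<in> carrier_mat d d \<and>
     (\<forall>a<d. \<forall>b<d. A $$ (a, b) = cnj (A $$ (b, a)))"

definition pjk :: "nat \<Rightarrow> (nat \<Rightarrow> nat \<Rightarrow> real) \<Rightarrow> nat \<Rightarrow> nat \<Rightarrow> complex" where
  "pjk d \<alpha> j k = 1 / of_nat d + 1 / (of_nat d * complex_of_real (sqrt (real d + 1))) *
      (\<Sum>r = 1..d - 1. omg d (\<alpha> j r + real k * real r))"

definition rho :: "nat \<Rightarrow> (nat \<Rightarrow> nat \<Rightarrow> real) \<Rightarrow> complex mat" where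
  "rho d \<alpha> = mat d d (\<lambda>(a, b). \<Sum>j\<le>d. \<Sum>k<d.
      (pjk d \<alpha> j k - 1 / (of_nat d + 1)) * Proj d j k $$ (a, b))"

definition admissible_alpha :: "nat \<Rightarrow> (nat \<Rightarrow> nat \<Rightarrow> real) \<Rightarrow> bool" where
  "admissible_alpha d \<alpha> \<longleftrightarrow> (\<forall>j\<le>d. \<forall>r\<in>{1..d-1}. \<alpha> j (d - r) = - \<alpha> j r)"

definition Omega :: "nat \<Rightarrow> complex mat set" where
  "Omega d = {rho d \<alpha> | \<alpha>. admissible_alpha d \<alpha>}"

end

theory Submission
  imports Defs "HOL-Computational_Algebra.Primes"
begin

definition w :: "nat \<Rightarrow> int \<Rightarrow> complex" where "w d n = omg d (of_int n)"

lemma omg_cis: "omg d x = cis (2*pi*x/d)"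
  unfolding omg_def cis_conv_exp by (simp add: mult_ac)

lemma omg_add: "omg d (x+y) = omg d x * omg d y"
  by (simp add: omg_cis cis_mult add_divide_distrib ring_distribs)

lemma omg_cnj: "cnj (omg d x) = omg d (-x)"
  by (simp add: omg_cis cis_cnj)

lemma norm_omg[simp]: "cmod (omg d x) = 1"
  by (simp add: omg_cis)

lemma w_add: "w d (x+y) = w d x * w d y"
  by (simp add: w_def omg_add)

lemma w_cnj: "cnj (w d x) = w d (-x)"
  by (simp add: w_def omg_cnj)

lemma norm_w[simp]: "cmod (w d x) = 1"
  by (simp add: w_def)

lemma w_zero[simp]: "w d 0 = 1"
  by (simp add: w_def omg_cis)

lemma w_eq_1: assumes "d > 0" shows "w d n = 1 \<longleftrightarrow> int d dvd n"
proof
  assume h: "w d n = 1"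
  hence "cos (2*pi*n/d) = 1" unfolding w_def omg_cis
    by (metis Re_complex_of_real complex_Re_of_int cis.sel(1) of_real_1)
  then obtain m :: int where "2*pi*n/d = real_of_int m*2*pi" using cos_one_2pi_int by blast
  hence "real_of_int n = real_of_int (m * int d)" using assms by (simp add: field_simps)
  hence "n = m * d" using of_int_eq_iff by blast
  then show "int d dvd n" by simp
next
  assume "int d dvd n"
  then obtain m where m: "n = int d * m" by blast
  have "2*pi*real_of_int n/d = 2*pi*real_of_int m" using assms m by (simp add: field_simps)
  then show "w d n = 1" unfolding w_def omg_cis by simp
qed

lemma w_cong: assumes "d > 0" "int d dvd (x - y)" shows "w d x = w d y"
proof -
  have "w d x = w d (x - y) * w d y" by (simp flip: w_add)
  then show ?thesis using w_eq_1[OF assms(1)] assms(2) by simp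
qed

lemma w_pow: "w d (n * int a) = w d n ^ a"
  by (induction a) (simp_all add: w_add ring_distribs)

lemma sum_w: assumes "d > 0"
  shows "(\<Sum>a<d. w d (n * int a)) = (if int d dvd n then of_nat d else 0)"
proof -
  have "(\<Sum>a<d. w d (n * int a)) = (\<Sum>a<d. w d n ^ a)" by (simp add: w_pow)
  also have "\<dots> = (if w d n = 1 then of_nat d else (1 - w d n ^ d) / (1 - w d n))"
    by (rule sum_gp_strict)
  also have "w d n ^ d = 1" using w_pow[of d n d] w_eq_1[OF assms, of "n * int d"] by simp
  finally show ?thesis using w_eq_1[OF assms] by simp
qed


lemma w_of_nat[simp]: "omg d (real a) = w d (int a)" by (simp add: w_def)

locale odp = fixes d :: nat assumes dprime: "prime d" and dodd: "odd d"
begin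

lemma dpos: "d > 0" using dprime not_prime_0 by (cases d) auto

definition h where "h = (d+1) div 2"

lemma h2: "2 * int h = int d + 1"
proof -
  obtain m where m: "d = 2*m+1" using dodd oddE by blast
  then have "h = m + 1" unfolding h_def by simp
  then show ?thesis using m by simp
qed

lemma tau_w: "tau d = w d (int h)"
proof -
  have "2*pi*real h/real d = pi + pi/d"
  proof -
    have "2 * real h = real d + 1" using h2 by (metis of_int_of_nat_eq of_int_add of_int_mult of_int_numeral of_int_1)
    then show ?thesis using dpos by (simp add: field_simps)
  qed
  then have "w d (int h) = cis (pi + pi/d)" by (simp add: w_def omg_cis)
  also have "\<dots> = - cis (pi/d)" by (simp flip: cis_mult)
  finally show ?thesis unfolding tau_def cis_conv_exp by (simp add: mult_ac)
qed

lemma Zop_entry: "a < d \<Longrightarrow> b < d \<Longrightarrow> Zop d $$ (a,b) = (if a = b then w d (int a) else 0)"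
  by (simp add: Zop_def)

lemma Zop_carrier: "Zop d \<in> carrier_mat d d" by (simp add: Zop_def)

lemma Zpow: "Zop d ^\<^sub>m n = mat d d (\<lambda>(a,b). if a = b then w d (int n * int a) else 0)"
proof (induction n)
  case 0
  show ?case by (rule eq_matI) (auto simp: Zop_def)
next
  case (Suc n)
  show ?case
  proof (rule eq_matI)
    fix a b assume ab: "a < dim_row (mat d d (\<lambda>(a,b). if a = b then w d (int (Suc n) * int a) else 0))"
      "b < dim_col (mat d d (\<lambda>(a,b). if a = b then w d (int (Suc n) * int a) else 0))"
    then have a: "a < d" and b: "b < d" by auto
    have "(Zop d ^\<^sub>m Suc n) $$ (a,b) = (Zop d ^\<^sub>m n * Zop d) $$ (a,b)" by simp
    also have "\<dots> = (\<Sum>c<d. (if a = c then w d (int n * int a) else 0) * (if c = b then w d (int c) else 0))"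
      unfolding Suc.IH using a b Zop_carrier by (simp add: Zop_entry scalar_prod_def lessThan_atLeast0)
    also have "\<dots> = (\<Sum>c<d. if c = a then (if a = b then w d (int n * int a) * w d (int a) else 0) else 0)"
      by (rule sum.cong) auto
    also have "\<dots> = (if a = b then w d (int n * int a) * w d (int a) else 0)"
      using a by simp
    also have "\<dots> = (if a = b then w d (int (Suc n) * int a) else 0)"
      by (simp add: w_add[symmetric] ring_distribs add_ac)
    finally show "(Zop d ^\<^sub>m Suc n) $$ (a,b) = mat d d (\<lambda>(a,b). if a = b then w d (int (Suc n) * int a) else 0) $$ (a,b)"
      using a b by simp
  qed (auto simp: Zop_def)
qed

lemma Xop_carrier: "Xop d \<in> carrier_mat d d" by (simp add: Xop_def)

lemma Dop_entry:
  assumes a: "a < d" and b: "b < d"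
  shows "Dop d 1 j $$ (a,b) = (if a = (b+1) mod d then tau d ^ j * w d (int j * int b) else 0)"
proof -
  have X1: "Xop d ^\<^sub>m 1 = Xop d" using Xop_carrier by simp
  have "(Xop d * Zop d ^\<^sub>m j) $$ (a,b) = (\<Sum>c<d. (if a = (c+1) mod d then 1 else 0) * (if c = b then w d (int j * int c) else 0))"
    using a b by (simp add: Zpow Xop_def scalar_prod_def lessThan_atLeast0)
  also have "\<dots> = (\<Sum>c<d. if c = b then (if a = (b+1) mod d then w d (int j * int b) else 0) else 0)"
    by (rule sum.cong) auto
  also have "\<dots> = (if a = (b+1) mod d then w d (int j * int b) else 0)"
    using b by simp
  finally show ?thesis using a b by (simp add: Dop_def X1 Zpow Xop_def)
qed

lemma Dop_carrier: "Dop d 1 j \<in> carrier_mat d d"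
  unfolding Dop_def by (rule smult_carrier_mat, rule mult_carrier_mat[of _ d d _ d]) (simp_all add: Zpow Xop_def)

lemma Dop_vec:
  assumes a: "a < d" and v: "dim_vec v = d"
  shows "(Dop d 1 j *\<^sub>v v) $ a = tau d ^ j * w d (int j * int ((a + d - 1) mod d)) * v $ ((a + d - 1) mod d)"
proof -
  let ?b0 = "(a + d - 1) mod d"
  have b0: "?b0 < d" using dpos by simp
  have b0e: "?b0 = (if a = 0 then d - 1 else a - 1)"
  proof (cases a)
    case 0 then show ?thesis using dpos by simp
  next
    case (Suc a') then have "a + d - 1 = a' + d * 1" by simp
    then show ?thesis using Suc a by (simp only: mod_mult_self1) simp
  qed
  have iff: "\<And>b. b < d \<Longrightarrow> (a = (b+1) mod d) = (b = ?b0)"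
  proof -
    fix b assume b: "b < d"
    show "(a = (b+1) mod d) = (b = ?b0)"
    proof (cases "b + 1 = d")
      case True
      then show ?thesis using a b b0e by (cases "a = 0") auto
    next
      case False
      then have "(b+1) mod d = b + 1" using b by simp
      then show ?thesis using a b b0e by auto
    qed
  qed
  have "(Dop d 1 j *\<^sub>v v) $ a = (\<Sum>b<d. Dop d 1 j $$ (a,b) * v $ b)"
    using a v Dop_carrier[of j] by (simp add: scalar_prod_def lessThan_atLeast0)
  also have "\<dots> = (\<Sum>b<d. (if b = ?b0 then tau d ^ j * w d (int j * int b) * v $ b else 0))"
  proof (rule sum.cong)
    fix b assume "b \<in> {..<d}"
    then have b: "b < d" by simp
    show "Dop d 1 j $$ (a,b) * v $ b = (if b = ?b0 then tau d ^ j * w d (int j * int b) * v $ b else 0)"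
      unfolding Dop_entry[OF a b] iff[OF b] by simp
  qed simp
  also have "\<dots> = tau d ^ j * w d (int j * int ?b0) * v $ ?b0"
    using b0 by simp
  finally show ?thesis .
qed

end


context odp begin

lemma b0e: "a < d \<Longrightarrow> (a + d - 1) mod d = (if a = 0 then d - 1 else a - 1)"
proof (cases a)
  case 0 then show ?thesis using dpos by simp
next
  case (Suc a') assume a: "a < d"
  then have "a + d - 1 = a' + d * 1" using Suc by simp
  then show ?thesis using Suc a by (simp only: mod_mult_self1) simp
qed

lemma Dop_vec':
  assumes a: "a < d" and v: "dim_vec v = d"
  shows "(Dop d 1 j *\<^sub>v v) $ a = (if a = 0 then tau d ^ j * w d (int j * int (d - 1)) * v $ (d - 1)
      else tau d ^ j * w d (int j * int (a - 1)) * v $ (a - 1))"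
  using Dop_vec[OF a v, of j] b0e[OF a] by simp

definition e :: "nat \<Rightarrow> nat \<Rightarrow> nat \<Rightarrow> int" where
  "e j k a = int j * int h * (int a)^2 - int k * int a"

definition u0 :: "nat \<Rightarrow> nat \<Rightarrow> nat \<Rightarrow> complex" where "u0 j k a = w d (e j k a)"

lemma norm_u0[simp]: "cmod (u0 j k a) = 1" by (simp add: u0_def)
lemma u0_0[simp]: "u0 j k 0 = 1" by (simp add: u0_def e_def)

lemma tau_pow: "tau d ^ j = w d (int j * int h)"
  using w_pow[of d "int h" j] by (simp add: tau_w mult.commute)

lemma u0_rec: "w d (int k) * u0 j k (Suc a) = tau d ^ j * w d (int j * int a) * u0 j k a"
proof -
  have 1: "int k + e j k (Suc a) - (int j * int h + int j * int a + e j k a) = int j * int a * (2 * int h - 1)"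
    unfolding e_def by (simp add: algebra_simps power2_eq_square)
  have "int k + e j k (Suc a) - (int j * int h + int j * int a + e j k a) = int d * (int j * int a)"
    unfolding 1 using h2 by simp
  then have "w d (int k + e j k (Suc a)) = w d (int j * int h + int j * int a + e j k a)"
    using w_cong[OF dpos] by (metis dvd_triv_left)
  then show ?thesis by (simp add: u0_def tau_pow w_add)
qed

lemma u0_wrap: "w d (int k) * u0 j k 0 = tau d ^ j * w d (int j * int (d - 1)) * u0 j k (d - 1)"
proof -
  define D where "D = int d"
  have dm: "int (d - Suc 0) = D - 1" using dpos unfolding D_def by simp
  have 1: "(int j * int h + int j * (D - 1) + (int j * int h * (D - 1)^2 - int k * (D - 1))) - int k
      = D * (int j * int h * (D - 2) + int j - int k) + int j * (2 * int h - 1)"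
    by (simp add: algebra_simps power2_eq_square)
  have "(int j * int h + int j * (D - 1) + (int j * int h * (D - 1)^2 - int k * (D - 1))) - int k
      = D * (int j * int h * (D - 2) + int j - int k + int j)"
    unfolding 1 using h2 unfolding D_def by (simp add: algebra_simps)
  then have "w d (int j * int h + int j * (D - 1) + (int j * int h * (D - 1)^2 - int k * (D - 1))) = w d (int k)"
    using w_cong[OF dpos] unfolding D_def by (metis dvd_triv_left)
  then show ?thesis by (simp add: u0_def e_def tau_pow w_add dm)
qed

lemma w_nz: "w d x \<noteq> 0" using norm_w[of d x] by (metis norm_zero zero_neq_one)

lemma eig_exists:
  assumes j: "j < d" and k: "k < d"
  shows "\<exists>v. unit_vec_c d v \<and> Dop d 1 j *\<^sub>v v = omg d (real k) \<cdot>\<^sub>v v"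
proof -
  define v where "v = vec d (\<lambda>a. u0 j k a / complex_of_real (sqrt (real d)))"
  have "(\<Sum>i<d. (cmod (v $ i))\<^sup>2) = (\<Sum>i<d. 1 / real d)"
    by (rule sum.cong) (simp_all add: v_def norm_divide power_divide)
  also have "\<dots> = 1" using dpos by simp
  finally have unit: "unit_vec_c d v" unfolding unit_vec_c_def v_def by simp
  have "Dop d 1 j *\<^sub>v v = omg d (real k) \<cdot>\<^sub>v v"
  proof (rule eq_vecI)
    fix a assume "a < dim_vec (omg d (real k) \<cdot>\<^sub>v v)"
    then have a: "a < d" by (simp add: v_def)
    have dv: "dim_vec v = d" by (simp add: v_def)
    show "(Dop d 1 j *\<^sub>v v) $ a = (omg d (real k) \<cdot>\<^sub>v v) $ a"
    proof (cases a)
      case 0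
      have "d - 1 < d" using dpos by simp
      then show ?thesis unfolding Dop_vec'[OF a dv] using 0 a u0_wrap[of k j]
        by (simp add: v_def)
    next
      case (Suc a')
      then show ?thesis unfolding Dop_vec'[OF a dv] using a u0_rec[of k j a']
        by (simp add: v_def)
    qed
  qed (use Dop_carrier[of j] in \<open>simp add: v_def\<close>)
  then show ?thesis using unit by blast
qed

end


context odp begin

lemma eig_unique:
  assumes j: "j < d" and v: "dim_vec v = d" and eq: "Dop d 1 j *\<^sub>v v = omg d (real k) \<cdot>\<^sub>v v"
  shows "a < d \<Longrightarrow> v $ a = v $ 0 * u0 j k a"
proof (induction a)
  case 0 then show ?case by simp
next
  case (Suc a)
  then have a: "a < d" and sa: "Suc a < d" by auto
  have "(Dop d 1 j *\<^sub>v v) $ Suc a = (omg d (real k) \<cdot>\<^sub>v v) $ Suc a" using eq by simp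
  then have "tau d ^ j * w d (int j * int a) * v $ a = w d (int k) * v $ Suc a"
    unfolding Dop_vec'[OF sa v] using sa v by simp
  then have "w d (int k) * v $ Suc a = v $ 0 * (w d (int k) * u0 j k (Suc a))"
    unfolding u0_rec Suc.IH[OF a] by (simp add: mult_ac)
  then show ?case using w_nz[of "int k"] by (simp add: mult_ac)
qed

lemma Proj_lt:
  assumes j: "j < d" and k: "k < d" and a: "a < d" and b: "b < d"
  shows "Proj d j k $$ (a,b) = u0 j k a * cnj (u0 j k b) / of_nat d"
proof -
  define v where "v = (SOME v. unit_vec_c d v \<and> Dop d 1 j *\<^sub>v v = omg d (real k) \<cdot>\<^sub>v v)"
  have "unit_vec_c d v \<and> Dop d 1 j *\<^sub>v v = omg d (real k) \<cdot>\<^sub>v v"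
    unfolding v_def by (rule someI_ex) (rule eig_exists[OF j k])
  then have unit: "unit_vec_c d v" and eq: "Dop d 1 j *\<^sub>v v = omg d (real k) \<cdot>\<^sub>v v" by auto
  have dv: "dim_vec v = d" using unit unfolding unit_vec_c_def by auto
  have va: "\<And>a. a < d \<Longrightarrow> v $ a = v $ 0 * u0 j k a" using eig_unique[OF j dv eq] .
  have "1 = (\<Sum>i<d. (cmod (v $ i))\<^sup>2)" using unit unfolding unit_vec_c_def by simp
  also have "\<dots> = (\<Sum>i<d. (cmod (v $ 0))\<^sup>2)"
  proof (rule sum.cong)
    fix i assume "i \<in> {..<d}"
    then have "v $ i = v $ 0 * u0 j k i" using va[of i] by blast
    then show "(cmod (v $ i))\<^sup>2 = (cmod (v $ 0))\<^sup>2" by (simp add: norm_mult)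
  qed simp
  also have "\<dots> = real d * (cmod (v $ 0))\<^sup>2" by simp
  finally have n0: "(cmod (v $ 0))\<^sup>2 = 1 / real d" using dpos by (simp add: field_simps)
  have "v $ 0 * cnj (v $ 0) = complex_of_real ((cmod (v $ 0))\<^sup>2)"
    by (rule complex_norm_square[symmetric])
  also have "\<dots> = 1 / of_nat d" unfolding n0 by simp
  finally have vv: "v $ 0 * cnj (v $ 0) = 1 / of_nat d" .
  have "Proj d j k $$ (a,b) = v $ a * cnj (v $ b)"
    unfolding Proj_def using j a b by (simp add: outer_def v_def)
  also have "\<dots> = (v $ 0 * cnj (v $ 0)) * (u0 j k a * cnj (u0 j k b))"
    apply (subst va[OF a], subst va[OF b])
    by (simp only: complex_cnj_mult mult_ac)
  finally show ?thesis unfolding vv by simp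
qed

definition U :: "nat \<Rightarrow> nat \<Rightarrow> nat \<Rightarrow> complex" where
  "U j k a = (if j < d then u0 j k a / complex_of_real (sqrt (real d)) else if a = k then 1 else 0)"

lemma Proj_U:
  assumes j: "j \<le> d" and k: "k < d" and a: "a < d" and b: "b < d"
  shows "Proj d j k $$ (a,b) = U j k a * cnj (U j k b)"
proof (cases "j < d")
  case True
  have s: "complex_of_real (sqrt (real d)) * complex_of_real (sqrt (real d)) = of_nat d"
    unfolding of_real_mult[symmetric] by simp
  have "U j k a * cnj (U j k b) = (u0 j k a * cnj (u0 j k b)) /
      (complex_of_real (sqrt (real d)) * complex_of_real (sqrt (real d)))"
    unfolding U_def using True by (simp add: complex_cnj_divide)
  then show ?thesis unfolding Proj_lt[OF True k a b] s by simp
next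
  case False
  have P: "Proj d j k = outer d (unit_vec d k)" unfolding Proj_def by (simp only: False if_False)
  show ?thesis unfolding P U_def using a b k False by (simp add: outer_def)
qed

end


lemma shift1:
  fixes G :: "nat \<Rightarrow> complex"
  assumes "G n = G 0"
  shows "(\<Sum>t<n. G (Suc t)) = (\<Sum>t<n. G t)"
proof (cases n)
  case 0 then show ?thesis by simp
next
  case (Suc m)
  have "(\<Sum>t<n. G (Suc t)) = (\<Sum>t<m. G (Suc t)) + G n" using Suc by simp
  also have "\<dots> = G 0 + (\<Sum>t<m. G (Suc t))" using assms by simp
  also have "\<dots> = (\<Sum>t<n. G t)" using Suc by (simp only: sum.lessThan_Suc_shift)
  finally show ?thesis .
qed

lemma shift_sum:
  fixes F :: "int \<Rightarrow> complex"
  assumes per: "\<And>x. F (x + int n) = F x"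
  shows "(\<Sum>t<n. F (int s + int t)) = (\<Sum>t<n. F (int t))"
proof (induction s)
  case 0 then show ?case by simp
next
  case (Suc s)
  have "(\<Sum>t<n. F (int (Suc s) + int t)) = (\<Sum>t<n. (\<lambda>x. F (int s + int x)) (Suc t))"
    by (simp add: add_ac)
  also have "\<dots> = (\<Sum>t<n. F (int s + int t))"
    by (rule shift1) (simp add: per[of "int s", simplified add_ac] add_ac)
  finally show ?case using Suc by simp
qed

context odp begin

lemma gauss:
  fixes c \<beta> :: int
  assumes cop: "\<And>t. int d dvd 2 * c * t \<Longrightarrow> int d dvd t"
  shows "(\<Sum>a<d. w d (c * (int a)^2 + \<beta> * int a)) * cnj (\<Sum>a<d. w d (c * (int a)^2 + \<beta> * int a)) = of_nat d"
proof -
  define Q where "Q x = c * x^2 + \<beta> * x" for x :: int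
  have "(\<Sum>a<d. w d (Q (int a))) * cnj (\<Sum>b<d. w d (Q (int b))) = (\<Sum>a<d. \<Sum>b<d. w d (Q (int a) - Q (int b)))"
    by (simp add: sum_product w_cnj w_add[symmetric])
  also have "\<dots> = (\<Sum>b<d. \<Sum>a<d. w d (Q (int a) - Q (int b)))"
    by (rule sum.swap)
  also have "\<dots> = (\<Sum>b<d. \<Sum>t<d. w d (c * (int t)^2 + \<beta> * int t) * w d ((2 * c * int t) * int b))"
  proof (rule sum.cong[OF refl])
    fix b assume "b \<in> {..<d}"
    have per: "\<And>x. w d (Q (x + int d) - Q (int b)) = w d (Q x - Q (int b))"
    proof -
      fix x
      have "Q (x + int d) - Q (int b) - (Q x - Q (int b)) = int d * (c * (2 * x + int d) + \<beta>)"
        unfolding Q_def by (simp add: algebra_simps power2_eq_square)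
      then show "w d (Q (x + int d) - Q (int b)) = w d (Q x - Q (int b))"
        using w_cong[OF dpos] by (metis dvd_triv_left)
    qed
    have "(\<Sum>a<d. w d (Q (int a) - Q (int b))) = (\<Sum>t<d. w d (Q (int b + int t) - Q (int b)))"
      using shift_sum[of "\<lambda>x. w d (Q x - Q (int b))" d b] per by simp
    also have "\<dots> = (\<Sum>t<d. w d (c * (int t)^2 + \<beta> * int t) * w d ((2 * c * int t) * int b))"
    proof (rule sum.cong[OF refl])
      fix t
      have "Q (int b + int t) - Q (int b) = (c * (int t)^2 + \<beta> * int t) + (2 * c * int t) * int b"
        unfolding Q_def by (simp add: algebra_simps power2_eq_square)
      then show "w d (Q (int b + int t) - Q (int b)) = w d (c * (int t)^2 + \<beta> * int t) * w d ((2 * c * int t) * int b)"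
        by (simp add: w_add)
    qed
    finally show "(\<Sum>a<d. w d (Q (int a) - Q (int b))) = (\<Sum>t<d. w d (c * (int t)^2 + \<beta> * int t) * w d ((2 * c * int t) * int b))" .
  qed
  also have "\<dots> = (\<Sum>t<d. w d (c * (int t)^2 + \<beta> * int t) * (\<Sum>b<d. w d ((2 * c * int t) * int b)))"
    by (subst sum.swap) (simp add: sum_distrib_left)
  also have "\<dots> = (\<Sum>t<d. if t = 0 then of_nat d else 0)"
  proof (rule sum.cong[OF refl])
    fix t assume t: "t \<in> {..<d}"
    have "int d dvd 2 * c * int t \<longleftrightarrow> t = 0"
    proof
      assume "int d dvd 2 * c * int t"
      then have "int d dvd int t" by (rule cop)
      then have "d dvd t" by simp
      then show "t = 0" using t dvd_imp_le[of d t] by (cases "t = 0") auto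
    qed simp
    then show "w d (c * (int t)^2 + \<beta> * int t) * (\<Sum>b<d. w d ((2 * c * int t) * int b)) = (if t = 0 then of_nat d else 0)"
      by (simp add: sum_w[OF dpos])
  qed
  also have "\<dots> = of_nat d" using dpos by simp
  finally show ?thesis unfolding Q_def .
qed

end


context odp begin

lemma small_dvd: assumes "int d dvd x" "\<bar>x\<bar> < int d" shows "x = 0"
proof (rule ccontr)
  assume nz: "x \<noteq> 0"
  obtain m where m: "x = int d * m" using assms(1) by blast
  then have "m \<noteq> 0" using nz by simp
  then have "int d * 1 \<le> int d * \<bar>m\<bar>" by (intro mult_left_mono) auto
  then show False using assms(2) m by (simp add: abs_mult)
qed

definition G :: "nat \<Rightarrow> nat \<Rightarrow> nat \<Rightarrow> nat \<Rightarrow> complex" where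
  "G j k J K = (\<Sum>a<d. cnj (U j k a) * U J K a)"

lemma sq: "complex_of_real (sqrt (real d)) * complex_of_real (sqrt (real d)) = of_nat d"
  unfolding of_real_mult[symmetric] by simp

lemma UU: assumes "j < d" "J < d"
  shows "cnj (U j k a) * U J K a = w d (e J K a - e j k a) / of_nat d"
proof -
  have "cnj (U j k a) * U J K a = (cnj (u0 j k a) * u0 J K a) /
      (complex_of_real (sqrt (real d)) * complex_of_real (sqrt (real d)))"
    unfolding U_def using assms by (simp add: complex_cnj_divide)
  also have "cnj (u0 j k a) * u0 J K a = w d (e J K a - e j k a)"
    unfolding u0_def w_cnj w_add[symmetric] by simp
  finally show ?thesis unfolding sq .
qed

lemma G_same: assumes j: "j \<le> d" and k: "k < d" and K: "K < d"
  shows "G j k j K = (if k = K then 1 else 0)"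
proof (cases "j < d")
  case True
  have "G j k j K = (\<Sum>a<d. w d ((int k - int K) * int a)) / of_nat d"
    unfolding G_def UU[OF True True] sum_divide_distrib[symmetric]
    by (rule arg_cong[where f="\<lambda>x. x / _"], rule sum.cong) (simp_all add: e_def algebra_simps)
  also have "\<dots> = (if int d dvd (int k - int K) then 1 else 0)"
    unfolding sum_w[OF dpos] using dpos by simp
  also have "int d dvd (int k - int K) \<longleftrightarrow> k = K"
  proof
    assume "int d dvd (int k - int K)"
    moreover have "\<bar>int k - int K\<bar> < int d" using k K by simp
    ultimately have "int k - int K = 0" by (rule small_dvd)
    then show "k = K" by simp
  qed simp
  finally show ?thesis .
next
  case False
  then have "G j k j K = (\<Sum>a<d. if a = k then (if k = K then 1 else 0) else 0)"
    unfolding G_def U_def by (intro sum.cong) auto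
  then show ?thesis using k by simp
qed

lemma G_std: assumes J: "J < d" and k: "k < d"
  shows "G d k J K = U J K k" and "G J K d k = cnj (U J K k)"
proof -
  have "G d k J K = (\<Sum>a<d. if a = k then U J K k else 0)"
    unfolding G_def U_def by (intro sum.cong) auto
  then show "G d k J K = U J K k" using k by simp
  have "G J K d k = (\<Sum>a<d. if a = k then cnj (U J K k) else 0)"
    unfolding G_def by (intro sum.cong) (auto simp: U_def)
  then show "G J K d k = cnj (U J K k)" using k by simp
qed

lemma normU: "J < d \<Longrightarrow> U J K k * cnj (U J K k) = 1 / of_nat d"
  using UU[of J J K k K] by (simp add: mult.commute)

lemma Gnorm:
  assumes j: "j \<le> d" and J: "J \<le> d" and k: "k < d" and K: "K < d"
  shows "G j k J K * cnj (G j k J K) = (if j = J then (if k = K then 1 else 0) else 1 / of_nat d)"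
proof (cases "j = J")
  case True
  then show ?thesis using G_same[OF j k K] by simp
next
  case False
  show ?thesis
  proof (cases "j < d \<and> J < d")
    case True
    then have jd: "j < d" and Jd: "J < d" by auto
    define c where "c = (int J - int j) * int h"
    define \<beta> where "\<beta> = int k - int K"
    define S where "S = (\<Sum>a<d. w d (c * (int a)^2 + \<beta> * int a))"
    have GS: "G j k J K = S / of_nat d"
      unfolding G_def UU[OF jd Jd] sum_divide_distrib[symmetric] S_def
      by (rule arg_cong[where f="\<lambda>x. x / _"], rule sum.cong) (simp_all add: e_def c_def \<beta>_def algebra_simps)
    have cop: "\<And>t. int d dvd 2 * c * t \<Longrightarrow> int d dvd t"
    proof -
      fix t assume a: "int d dvd 2 * c * t"
      have "2 * c * t = (int J - int j) * t + int d * ((int J - int j) * t)"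
        unfolding c_def using h2 by (simp add: algebra_simps)
      then have e2: "(int J - int j) * t = 2 * c * t - int d * ((int J - int j) * t)" by simp
      have "int d dvd 2 * c * t - int d * ((int J - int j) * t)"
        by (rule dvd_diff[OF a dvd_triv_left])
      then have "int d dvd (int J - int j) * t" unfolding e2[symmetric] .
      moreover have "prime (int d)" using dprime by simp
      ultimately have "int d dvd (int J - int j) \<or> int d dvd t" using prime_dvd_mult_iff by blast
      moreover have "\<not> int d dvd (int J - int j)"
      proof
        assume "int d dvd (int J - int j)"
        moreover have "\<bar>int J - int j\<bar> < int d" using jd Jd by simp
        ultimately have "int J - int j = 0" by (rule small_dvd)
        then show False using False by simp
      qed
      ultimately show "int d dvd t" by blast
    qed
    have "S * cnj S = of_nat d" unfolding S_def by (rule gauss[OF cop])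
    then have "G j k J K * cnj (G j k J K) = of_nat d / (of_nat d * of_nat d)"
      unfolding GS by (simp add: complex_cnj_divide)
    then show ?thesis using False dpos by simp
  next
    case False2: False
    then have "(j = d \<and> J < d) \<or> (J = d \<and> j < d)" using j J False by auto
    then show ?thesis
    proof
      assume "j = d \<and> J < d"
      then show ?thesis using G_std(1)[of J k K] normU[of J K k] k False by auto
    next
      assume "J = d \<and> j < d"
      then show ?thesis using G_std(2)[of j K k] normU[of j k K] K False by (auto simp: mult.commute)
    qed
  qed
qed

lemma G_cnj: "G J K j k = cnj (G j k J K)"
  unfolding G_def by (simp add: mult.commute)

end


context odp begin

definition Aa :: "(nat \<Rightarrow> nat \<Rightarrow> real) \<Rightarrow> nat \<Rightarrow> nat \<Rightarrow> complex" where
  "Aa \<alpha> j r = omg d (\<alpha> j r)"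
definition Ps :: "(nat \<Rightarrow> nat \<Rightarrow> real) \<Rightarrow> nat \<Rightarrow> nat \<Rightarrow> complex" where
  "Ps \<alpha> j k = (\<Sum>r=1..d-1. Aa \<alpha> j r * w d (int k * int r))"
definition Cc :: complex where
  "Cc = 1 / (of_nat d * complex_of_real (sqrt (real d + 1)))"

lemma pjk_Ps: "pjk d \<alpha> j k = 1 / of_nat d + Cc * Ps \<alpha> j k"
proof -
  have "(\<Sum>r = 1..d - 1. omg d (\<alpha> j r + real k * real r)) = Ps \<alpha> j k"
    unfolding Ps_def Aa_def by (rule sum.cong) (simp_all add: omg_add w_def)
  then show ?thesis unfolding pjk_def Cc_def by simp
qed

lemma Ps_mod: "Ps \<alpha> j ((k + s) mod d) = Ps \<alpha> j (k + s)"
  unfolding Ps_def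
proof (rule sum.cong[OF refl])
  fix r
  have "int d dvd int ((k + s) mod d) * int r - int (k + s) * int r"
  proof -
    have "(k + s) mod d + d * ((k+s) div d) = k + s" by (rule mod_mult_div_eq)
    then have y: "int (k + s) = int ((k + s) mod d) + int d * int ((k+s) div d)"
      by (metis of_nat_add of_nat_mult)
    have "int ((k + s) mod d) * int r - int (k + s) * int r = int d * (- int ((k+s) div d) * int r)"
      unfolding y by (simp add: algebra_simps)
    then show ?thesis by simp
  qed
  then show "Aa \<alpha> j r * w d (int ((k + s) mod d) * int r) = Aa \<alpha> j r * w d (int (k + s) * int r)"
    using w_cong[OF dpos] by simp
qed

lemma sum_Ps: "(\<Sum>k<d. Ps \<alpha> j (k + s)) = 0"
proof -
  have "(\<Sum>k<d. Ps \<alpha> j (k + s)) = (\<Sum>r=1..d-1. \<Sum>k<d. Aa \<alpha> j r * w d (int (k + s) * int r))"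
    unfolding Ps_def by (rule sum.swap)
  also have "\<dots> = (\<Sum>r=1..d-1. Aa \<alpha> j r * w d (int s * int r) * (\<Sum>k<d. w d (int r * int k)))"
  proof (rule sum.cong[OF refl])
    fix r
    show "(\<Sum>k<d. Aa \<alpha> j r * w d (int (k + s) * int r)) = Aa \<alpha> j r * w d (int s * int r) * (\<Sum>k<d. w d (int r * int k))"
      unfolding sum_distrib_left by (rule sum.cong) (simp_all add: w_add[symmetric] algebra_simps)
  qed
  also have "\<dots> = 0"
  proof (rule sum.neutral, rule ballI)
    fix r assume r: "r \<in> {1..d-1}"
    have "\<not> int d dvd int r"
    proof
      assume "int d dvd int r"
      then have "d dvd r" by simp
      then show False using r dvd_imp_le[of d r] by auto
    qed
    then show "Aa \<alpha> j r * w d (int s * int r) * (\<Sum>k<d. w d (int r * int k)) = 0"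
      by (simp add: sum_w[OF dpos])
  qed
  finally show ?thesis .
qed

lemma pair_iff: assumes r: "r \<in> {1..d-1}" and q: "q \<in> {1..d-1}"
  shows "int d dvd int r + int q \<longleftrightarrow> q = d - r"
proof
  assume "int d dvd int r + int q"
  then have "int d dvd (int r + int q - int d)" by (simp add: dvd_diff)
  moreover have "\<bar>int r + int q - int d\<bar> < int d" using r q by auto
  ultimately have "int r + int q - int d = 0" by (rule small_dvd)
  then show "q = d - r" by simp
next
  assume "q = d - r"
  then have "int r + int q = int d" using r by (auto simp: of_nat_diff)
  then show "int d dvd int r + int q" by simp
qed

lemma AA: assumes adm: "admissible_alpha d \<alpha>" and j: "j \<le> d" and r: "r \<in> {1..d-1}"
  shows "Aa \<alpha> j r * Aa \<alpha> j (d - r) = 1"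
proof -
  have "\<alpha> j (d - r) = - \<alpha> j r" using adm j r unfolding admissible_alpha_def by blast
  then show ?thesis unfolding Aa_def omg_add[symmetric] by (simp add: omg_cis)
qed

lemma sum_PP: assumes adm: "admissible_alpha d \<alpha>" and j: "j \<le> d"
  shows "(\<Sum>k<d. Ps \<alpha> j k * Ps \<alpha> j (k + s)) = of_nat d * ((if int d dvd int s then of_nat d else 0) - 1)"
proof -
  let ?A = "Aa \<alpha> j"
  have "(\<Sum>k<d. Ps \<alpha> j k * Ps \<alpha> j (k + s)) =
      (\<Sum>k<d. \<Sum>r=1..d-1. \<Sum>q=1..d-1. ?A r * ?A q * w d (int s * int q) * w d ((int r + int q) * int k))"
  proof (rule sum.cong[OF refl])
    fix k
    show "Ps \<alpha> j k * Ps \<alpha> j (k + s) = (\<Sum>r=1..d-1. \<Sum>q=1..d-1. ?A r * ?A q * w d (int s * int q) * w d ((int r + int q) * int k))"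
      unfolding Ps_def sum_product
      by (intro sum.cong refl) (simp add: w_add[symmetric] algebra_simps)
  qed
  also have "\<dots> = (\<Sum>r=1..d-1. \<Sum>k<d. \<Sum>q=1..d-1. ?A r * ?A q * w d (int s * int q) * w d ((int r + int q) * int k))"
    by (rule sum.swap)
  also have "\<dots> = (\<Sum>r=1..d-1. \<Sum>q=1..d-1. \<Sum>k<d. ?A r * ?A q * w d (int s * int q) * w d ((int r + int q) * int k))"
    by (rule sum.cong[OF refl], rule sum.swap)
  also have "\<dots> = (\<Sum>r=1..d-1. \<Sum>q=1..d-1. if q = d - r then of_nat d * w d (- (int s * int r)) else 0)"
  proof (intro sum.cong refl)
    fix r q assume r: "r \<in> {1..d-1}" and q: "q \<in> {1..d-1}"
    have "(\<Sum>k<d. ?A r * ?A q * w d (int s * int q) * w d ((int r + int q) * int k)) =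
        ?A r * ?A q * w d (int s * int q) * (if q = d - r then of_nat d else 0)"
      unfolding sum_distrib_left[symmetric] sum_w[OF dpos] pair_iff[OF r q] ..
    also have "\<dots> = (if q = d - r then of_nat d * w d (- (int s * int r)) else 0)"
    proof (cases "q = d - r")
      case True
      have "w d (int s * int q) = w d (- (int s * int r))"
      proof (rule w_cong[OF dpos])
        have qq: "int q = int d - int r" using True r by (auto simp: of_nat_diff)
        have "int s * int q - - (int s * int r) = int s * (int q + int r)" by (simp add: algebra_simps)
        also have "\<dots> = int d * int s" unfolding qq by simp
        finally have "int s * int q - - (int s * int r) = int d * int s" .
        then show "int d dvd int s * int q - - (int s * int r)" by simp
      qed
      then show ?thesis using True AA[OF adm j r] by simp
    qed simp
    finally show "(\<Sum>k<d. ?A r * ?A q * w d (int s * int q) * w d ((int r + int q) * int k)) =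
        (if q = d - r then of_nat d * w d (- (int s * int r)) else 0)" .
  qed
  also have "\<dots> = (\<Sum>r=1..d-1. of_nat d * w d (- int s * int r))"
  proof (rule sum.cong[OF refl])
    fix r assume r: "r \<in> {1..d-1}"
    then have "d - r \<in> {1..d-1}" by auto
    then show "(\<Sum>q=1..d-1. if q = d - r then of_nat d * w d (- (int s * int r)) else 0) = of_nat d * w d (- int s * int r)"
      by simp
  qed
  also have "\<dots> = of_nat d * ((\<Sum>r<d. w d (- int s * int r)) - 1)"
  proof -
    have "{..<d} = insert 0 {1..d-1}" using dpos by auto
    then have "(\<Sum>r<d. w d (- int s * int r)) = 1 + (\<Sum>r=1..d-1. w d (- int s * int r))" by simp
    then show ?thesis by (simp add: sum_distrib_left[symmetric])
  qed
  also have "\<dots> = of_nat d * ((if int d dvd int s then of_nat d else 0) - 1)"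
    unfolding sum_w[OF dpos] by simp
  finally show ?thesis .
qed

end


context odp begin

lemma fld0: fixes x :: complex assumes "x \<noteq> 0" "x + 1 \<noteq> 0"
  shows "x + x * x \<noteq> 0" "x * x + x * (x * x) \<noteq> 0" "1 + x \<noteq> 0"
proof -
  have a: "x * (x + 1) \<noteq> 0" "x * x * (x + 1) \<noteq> 0" using assms by simp_all
  show "x + x * x \<noteq> 0" using a(1) by (simp add: algebra_simps)
  show "x * x + x * (x * x) \<noteq> 0" using a(2) by (simp add: algebra_simps)
  show "1 + x \<noteq> 0" using assms(2) by (simp add: add.commute)
qed

lemma fld1: fixes x :: complex assumes "x \<noteq> 0" "x + 1 \<noteq> 0"
  shows "1 / x + 1 / (x * x * (x + 1)) * (x * (x - 1)) = 2 / (x + 1)"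
  using assms fld0[OF assms] by (simp add: field_simps)

lemma fld2: fixes x :: complex assumes "x \<noteq> 0" "x + 1 \<noteq> 0"
  shows "1 / x + 1 / (x * x * (x + 1)) * (x * (0 - 1)) = 1 / (x + 1)"
  using assms fld0[OF assms] by (simp add: field_simps)

lemma CC: "Cc * Cc = 1 / (of_nat d * of_nat d * (of_nat d + 1))"
proof -
  have "complex_of_real (sqrt (real d + 1)) * complex_of_real (sqrt (real d + 1)) = of_nat d + 1"
    unfolding of_real_mult[symmetric] by simp
  then show ?thesis unfolding Cc_def by (simp add: field_simps)
qed

lemma pjk_sum: "(\<Sum>k<d. pjk d \<alpha> j k) = 1"
proof -
  have "(\<Sum>k<d. pjk d \<alpha> j k) = (\<Sum>k<d. 1 / of_nat d) + Cc * (\<Sum>k<d. Ps \<alpha> j (k + 0))"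
    by (simp add: pjk_Ps sum.distrib sum_distrib_left)
  also have "\<dots> = 1" unfolding sum_Ps using dpos by simp
  finally show ?thesis .
qed

lemma pjk_pair: assumes adm: "admissible_alpha d \<alpha>" and j: "j \<le> d" and s: "s < d"
  shows "(\<Sum>k<d. pjk d \<alpha> j k * pjk d \<alpha> j ((k + s) mod d)) =
    (if s = 0 then 2 / (of_nat d + 1) else 1 / (of_nat d + 1))"
proof -
  let ?P = "Ps \<alpha> j"
  have "(\<Sum>k<d. pjk d \<alpha> j k * pjk d \<alpha> j ((k + s) mod d)) =
      (\<Sum>k<d. 1 / (of_nat d * of_nat d) + (Cc / of_nat d) * ?P (k + 0) + (Cc / of_nat d) * ?P (k + s)
         + (Cc * Cc) * (?P k * ?P (k + s)))"
    by (rule sum.cong[OF refl]) (simp add: pjk_Ps Ps_mod algebra_simps)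
  also have "\<dots> = of_nat d * (1 / (of_nat d * of_nat d)) + (Cc / of_nat d) * (\<Sum>k<d. ?P (k + 0))
      + (Cc / of_nat d) * (\<Sum>k<d. ?P (k + s)) + (Cc * Cc) * (\<Sum>k<d. ?P k * ?P (k + s))"
    by (simp add: sum.distrib sum_distrib_left)
  also have "\<dots> = 1 / of_nat d + (Cc * Cc) * (of_nat d * ((if int d dvd int s then of_nat d else 0) - 1))"
    unfolding sum_Ps sum_PP[OF adm j] using dpos by simp
  also have "(int d dvd int s) = (s = 0)"
  proof
    assume "int d dvd int s"
    then have "d dvd s" by simp
    then show "s = 0" using s dvd_imp_le[of d s] by (cases "s = 0") auto
  qed simp
  finally have eq: "(\<Sum>k<d. pjk d \<alpha> j k * pjk d \<alpha> j ((k + s) mod d)) =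
    1 / of_nat d + Cc * Cc * (of_nat d * ((if s = 0 then of_nat d else 0) - 1))" .
  have n1: "(of_nat d :: complex) \<noteq> 0" using dpos by simp
  have n2: "(of_nat d + 1 :: complex) \<noteq> 0"
    by (metis of_nat_Suc of_nat_eq_0_iff add.commute nat.simps(3))
  show ?thesis
  proof (cases "s = 0")
    case True
    have "1 / of_nat d + 1 / (of_nat d * of_nat d * (of_nat d + 1)) * (of_nat d * (of_nat d - 1))
        = (2 :: complex) / (of_nat d + 1)"
      by (rule fld1[OF n1 n2])
    then show ?thesis unfolding eq CC using True by simp
  next
    case False
    have "1 / of_nat d + 1 / (of_nat d * of_nat d * (of_nat d + 1)) * (of_nat d * (0 - 1))
        = (1 :: complex) / (of_nat d + 1)"
      by (rule fld2[OF n1 n2])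
    then show ?thesis unfolding eq CC using False by simp
  qed
qed

lemma Ps_cnj: assumes adm: "admissible_alpha d \<alpha>" and j: "j \<le> d"
  shows "cnj (Ps \<alpha> j k) = Ps \<alpha> j k"
proof -
  have "cnj (Ps \<alpha> j k) = (\<Sum>r=1..d-1. Aa \<alpha> j (d - r) * w d (int k * int (d - r)))"
    unfolding Ps_def cnj_sum
  proof (rule sum.cong[OF refl])
    fix r assume r: "r \<in> {1..d-1}"
    have "\<alpha> j (d - r) = - \<alpha> j r" using adm j r unfolding admissible_alpha_def by blast
    then have 1: "cnj (Aa \<alpha> j r) = Aa \<alpha> j (d - r)" unfolding Aa_def omg_cnj by simp
    have 2: "cnj (w d (int k * int r)) = w d (int k * int (d - r))"
      unfolding w_cnj
    proof (rule w_cong[OF dpos])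
      have "int (d - r) = int d - int r" using r by (auto simp: of_nat_diff)
      then have "- (int k * int r) - int k * int (d - r) = int d * (- int k)" by (simp add: algebra_simps)
      then show "int d dvd - (int k * int r) - int k * int (d - r)" by simp
    qed
    show "cnj (Aa \<alpha> j r * w d (int k * int r)) = Aa \<alpha> j (d - r) * w d (int k * int (d - r))"
      using 1 2 by simp
  qed
  also have "\<dots> = (\<Sum>r=1..d-1. Aa \<alpha> j (d - 1 + 1 - r) * w d (int k * int (d - 1 + 1 - r)))"
    using dpos by simp
  also have "\<dots> = Ps \<alpha> j k"
    unfolding Ps_def by (rule sum.atLeastAtMost_rev[symmetric])
  finally show ?thesis .
qed

lemma pjk_real: assumes adm: "admissible_alpha d \<alpha>" and j: "j \<le> d"
  shows "cnj (pjk d \<alpha> j k) = pjk d \<alpha> j k"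
proof -
  have "cnj Cc = Cc" unfolding Cc_def by (simp add: complex_cnj_divide)
  then show ?thesis unfolding pjk_Ps using Ps_cnj[OF adm j] by simp
qed

end


lemma swap4: "(\<Sum>a\<in>A. \<Sum>b\<in>B. \<Sum>j\<in>C. \<Sum>k\<in>D. f a b j k) = (\<Sum>j\<in>C. \<Sum>k\<in>D. \<Sum>a\<in>A. \<Sum>b\<in>B. f a b j k)"
proof -
  have "(\<Sum>a\<in>A. \<Sum>b\<in>B. \<Sum>j\<in>C. \<Sum>k\<in>D. f a b j k) = (\<Sum>a\<in>A. \<Sum>j\<in>C. \<Sum>b\<in>B. \<Sum>k\<in>D. f a b j k)"
    by (rule sum.cong[OF refl], rule sum.swap)
  also have "\<dots> = (\<Sum>a\<in>A. \<Sum>j\<in>C. \<Sum>k\<in>D. \<Sum>b\<in>B. f a b j k)"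
    by (rule sum.cong[OF refl], rule sum.cong[OF refl], rule sum.swap)
  also have "\<dots> = (\<Sum>j\<in>C. \<Sum>a\<in>A. \<Sum>k\<in>D. \<Sum>b\<in>B. f a b j k)" by (rule sum.swap)
  also have "\<dots> = (\<Sum>j\<in>C. \<Sum>k\<in>D. \<Sum>a\<in>A. \<Sum>b\<in>B. f a b j k)"
    by (rule sum.cong[OF refl], rule sum.swap)
  finally show ?thesis .
qed

lemma tr_prod: assumes "A \<in> carrier_mat n n" "B \<in> carrier_mat n n"
  shows "mtrace (A * B) = (\<Sum>a<n. \<Sum>b<n. A $$ (a,b) * B $$ (b,a))"
  unfolding mtrace_def using assms
  by (intro sum.cong) (auto simp: scalar_prod_def lessThan_atLeast0)

context odp begin

definition cf :: "(nat \<Rightarrow> nat \<Rightarrow> real) \<Rightarrow> nat \<Rightarrow> nat \<Rightarrow> complex" where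
  "cf \<alpha> j k = pjk d \<alpha> j k - 1 / (of_nat d + 1)"

lemma rho_entry: assumes a: "a < d" and b: "b < d"
  shows "rho d \<alpha> $$ (a,b) = (\<Sum>j\<le>d. \<Sum>k<d. cf \<alpha> j k * (U j k a * cnj (U j k b)))"
  unfolding rho_def cf_def using a b by (simp add: Proj_U)

lemma rho_carrier: "rho d \<alpha> \<in> carrier_mat d d" unfolding rho_def by simp

lemma Proj_carrier: "j \<le> d \<Longrightarrow> Proj d j k \<in> carrier_mat d d"
  unfolding Proj_def outer_def by simp

lemma sum_cf: "(\<Sum>k<d. cf \<alpha> j k) = 1 / (of_nat d + 1)"
proof -
  have n2: "(of_nat d + 1 :: complex) \<noteq> 0"
    by (metis of_nat_Suc of_nat_eq_0_iff add.commute nat.simps(3))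
  have "(\<Sum>k<d. cf \<alpha> j k) = 1 - of_nat d / (of_nat d + 1)"
    unfolding cf_def sum_subtractf pjk_sum by simp
  also have "\<dots> = 1 / (of_nat d + 1)" using n2 by (simp add: field_simps)
  finally show ?thesis .
qed

lemma tr_rho_Proj: assumes J: "J \<le> d" and K: "K < d"
  shows "mtrace (rho d \<alpha> * Proj d J K) = pjk d \<alpha> J K"
proof -
  have "mtrace (rho d \<alpha> * Proj d J K) = (\<Sum>a<d. \<Sum>b<d. rho d \<alpha> $$ (a,b) * Proj d J K $$ (b,a))"
    by (rule tr_prod[OF rho_carrier Proj_carrier[OF J]])
  also have "\<dots> = (\<Sum>a<d. \<Sum>b<d. \<Sum>j\<le>d. \<Sum>k<d. cf \<alpha> j k * (U j k a * cnj (U j k b)) * (U J K b * cnj (U J K a)))"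
    by (intro sum.cong refl) (simp add: rho_entry Proj_U J K sum_distrib_right)
  also have "\<dots> = (\<Sum>j\<le>d. \<Sum>k<d. \<Sum>a<d. \<Sum>b<d. cf \<alpha> j k * (U j k a * cnj (U j k b)) * (U J K b * cnj (U J K a)))"
    by (rule swap4)
  also have "\<dots> = (\<Sum>j\<le>d. \<Sum>k<d. cf \<alpha> j k * (G j k J K * cnj (G j k J K)))"
  proof (intro sum.cong refl)
    fix j k
    have gc: "G J K j k = cnj (G j k J K)" by (rule G_cnj)
    have "G j k J K * cnj (G j k J K) = G J K j k * G j k J K" unfolding gc by (rule mult.commute)
    also have "\<dots> = (\<Sum>a<d. \<Sum>b<d. (cnj (U J K a) * U j k a) * (cnj (U j k b) * U J K b))"
      unfolding G_def sum_product ..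
    finally show "(\<Sum>a<d. \<Sum>b<d. cf \<alpha> j k * (U j k a * cnj (U j k b)) * (U J K b * cnj (U J K a))) =
        cf \<alpha> j k * (G j k J K * cnj (G j k J K))"
      by (simp add: sum_distrib_left mult_ac)
  qed
  also have "\<dots> = (\<Sum>j\<le>d. if j = J then cf \<alpha> J K else 1 / (of_nat d * (of_nat d + 1)))"
  proof (rule sum.cong[OF refl])
    fix j assume j: "j \<in> {..d}"
    show "(\<Sum>k<d. cf \<alpha> j k * (G j k J K * cnj (G j k J K))) = (if j = J then cf \<alpha> J K else 1 / (of_nat d * (of_nat d + 1)))"
    proof (cases "j = J")
      case True
      have "(\<Sum>k<d. cf \<alpha> j k * (G j k J K * cnj (G j k J K))) = (\<Sum>k<d. if k = K then cf \<alpha> J K else 0)"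
        using True j J K by (intro sum.cong refl) (simp add: Gnorm)
      then show ?thesis using True K by simp
    next
      case False
      have "(\<Sum>k<d. cf \<alpha> j k * (G j k J K * cnj (G j k J K))) = (\<Sum>k<d. cf \<alpha> j k) / of_nat d"
        using False j J K by (simp add: Gnorm sum_divide_distrib)
      then show ?thesis using False by (simp add: sum_cf)
    qed
  qed
  also have "\<dots> = cf \<alpha> J K + (\<Sum>j\<in>{..d} - {J}. 1 / (of_nat d * (of_nat d + 1)))"
    using J by (simp add: sum.remove[of "{..d}" J])
  also have "\<dots> = cf \<alpha> J K + of_nat d * (1 / (of_nat d * (of_nat d + 1)))"
    using J by simp
  also have "\<dots> = pjk d \<alpha> J K"
  proof -
    have n2: "(of_nat d + 1 :: complex) \<noteq> 0"
      by (metis of_nat_Suc of_nat_eq_0_iff add.commute nat.simps(3))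
    have "of_nat d * (1 / (of_nat d * (of_nat d + 1))) = (1 :: complex) / (of_nat d + 1)"
      using dpos n2 by simp
    then show ?thesis unfolding cf_def by simp
  qed
  finally show ?thesis .
qed

end


context odp begin

lemma pjk_sq: assumes adm: "admissible_alpha d \<alpha>" and j: "j \<le> d"
  shows "(\<Sum>k<d. pjk d \<alpha> j k * pjk d \<alpha> j k) = 2 / (of_nat d + 1)"
proof -
  have "(\<Sum>k<d. pjk d \<alpha> j k * pjk d \<alpha> j k) = (\<Sum>k<d. pjk d \<alpha> j k * pjk d \<alpha> j ((k + 0) mod d))"
    by (intro sum.cong refl) simp
  also have "\<dots> = 2 / (of_nat d + 1)" using pjk_pair[OF adm j, of 0] dpos by simp
  finally show ?thesis .
qed

lemma cf_real: assumes adm: "admissible_alpha d \<alpha>" and j: "j \<le> d"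
  shows "cnj (cf \<alpha> j k) = cf \<alpha> j k"
  unfolding cf_def using pjk_real[OF adm j] by simp

lemma rho_herm: assumes adm: "admissible_alpha d \<alpha>"
  shows "hermitian_mat d (rho d \<alpha>)"
  unfolding hermitian_mat_def
proof (intro conjI rho_carrier allI impI)
  fix a b assume a: "a < d" and b: "b < d"
  have "cnj (rho d \<alpha> $$ (b, a)) = (\<Sum>j\<le>d. \<Sum>k<d. cnj (cf \<alpha> j k) * (cnj (U j k b) * U j k a))"
    unfolding rho_entry[OF b a] by simp
  also have "\<dots> = (\<Sum>j\<le>d. \<Sum>k<d. cf \<alpha> j k * (U j k a * cnj (U j k b)))"
    by (intro sum.cong refl) (simp add: cf_real[OF adm] mult.commute)
  finally show "rho d \<alpha> $$ (a, b) = cnj (rho d \<alpha> $$ (b, a))" unfolding rho_entry[OF a b] by simp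
qed

lemma tr_rho: "mtrace (rho d \<alpha>) = 1"
proof -
  have "mtrace (rho d \<alpha>) = (\<Sum>a<d. \<Sum>j\<le>d. \<Sum>k<d. cf \<alpha> j k * (U j k a * cnj (U j k a)))"
  proof -
    have "dim_row (rho d \<alpha>) = d" unfolding rho_def by simp
    then have "mtrace (rho d \<alpha>) = (\<Sum>a<d. rho d \<alpha> $$ (a,a))" unfolding mtrace_def by simp
    also have "\<dots> = (\<Sum>a<d. \<Sum>j\<le>d. \<Sum>k<d. cf \<alpha> j k * (U j k a * cnj (U j k a)))"
      by (intro sum.cong refl) (simp add: rho_entry)
    finally show ?thesis .
  qed
  also have "\<dots> = (\<Sum>j\<le>d. \<Sum>a<d. \<Sum>k<d. cf \<alpha> j k * (U j k a * cnj (U j k a)))"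
    by (rule sum.swap)
  also have "\<dots> = (\<Sum>j\<le>d. \<Sum>k<d. \<Sum>a<d. cf \<alpha> j k * (U j k a * cnj (U j k a)))"
    by (rule sum.cong[OF refl], rule sum.swap)
  also have "\<dots> = (\<Sum>j\<le>d. \<Sum>k<d. cf \<alpha> j k * G j k j k)"
    unfolding G_def by (intro sum.cong refl) (simp add: sum_distrib_left mult.commute)
  also have "\<dots> = (\<Sum>j\<le>d. \<Sum>k<d. cf \<alpha> j k)"
    by (intro sum.cong refl) (simp add: G_same)
  also have "\<dots> = (\<Sum>j\<le>d. 1 / (of_nat d + 1))" by (simp add: sum_cf)
  also have "\<dots> = 1"
  proof -
    have n2: "(of_nat d + 1 :: complex) \<noteq> 0"
      by (metis of_nat_Suc of_nat_eq_0_iff add.commute nat.simps(3))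
    then show ?thesis by (simp add: field_simps)
  qed
  finally show ?thesis .
qed

lemma tr_rho2: assumes adm: "admissible_alpha d \<alpha>"
  shows "mtrace (rho d \<alpha> * rho d \<alpha>) = 1"
proof -
  have "mtrace (rho d \<alpha> * rho d \<alpha>) = (\<Sum>a<d. \<Sum>b<d. rho d \<alpha> $$ (a,b) * rho d \<alpha> $$ (b,a))"
    by (rule tr_prod[OF rho_carrier rho_carrier])
  also have "\<dots> = (\<Sum>a<d. \<Sum>b<d. \<Sum>j\<le>d. \<Sum>k<d. cf \<alpha> j k * (rho d \<alpha> $$ (a,b) * Proj d j k $$ (b,a)))"
  proof (intro sum.cong refl)
    fix a b assume "a \<in> {..<d}" "b \<in> {..<d}"
    then have a: "a < d" and b: "b < d" by auto
    have "rho d \<alpha> $$ (b,a) = (\<Sum>j\<le>d. \<Sum>k<d. cf \<alpha> j k * Proj d j k $$ (b,a))"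
      unfolding rho_entry[OF b a] by (intro sum.cong refl) (simp add: Proj_U a b)
    then show "rho d \<alpha> $$ (a,b) * rho d \<alpha> $$ (b,a) = (\<Sum>j\<le>d. \<Sum>k<d. cf \<alpha> j k * (rho d \<alpha> $$ (a,b) * Proj d j k $$ (b,a)))"
      by (simp add: sum_distrib_left mult_ac)
  qed
  also have "\<dots> = (\<Sum>j\<le>d. \<Sum>k<d. \<Sum>a<d. \<Sum>b<d. cf \<alpha> j k * (rho d \<alpha> $$ (a,b) * Proj d j k $$ (b,a)))"
    by (rule swap4)
  also have "\<dots> = (\<Sum>j\<le>d. \<Sum>k<d. cf \<alpha> j k * mtrace (rho d \<alpha> * Proj d j k))"
    by (intro sum.cong refl) (simp add: tr_prod[OF rho_carrier Proj_carrier] sum_distrib_left)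
  also have "\<dots> = (\<Sum>j\<le>d. \<Sum>k<d. cf \<alpha> j k * pjk d \<alpha> j k)"
    by (intro sum.cong refl) (simp add: tr_rho_Proj)
  also have "\<dots> = (\<Sum>j\<le>d. 1 / (of_nat d + 1))"
  proof (rule sum.cong[OF refl])
    fix j assume "j \<in> {..d}"
    then have j: "j \<le> d" by simp
    have "(\<Sum>k<d. cf \<alpha> j k * pjk d \<alpha> j k) = (\<Sum>k<d. pjk d \<alpha> j k * pjk d \<alpha> j k) - (\<Sum>k<d. pjk d \<alpha> j k) / (of_nat d + 1)"
      unfolding cf_def by (simp add: algebra_simps sum_subtractf sum_divide_distrib)
    also have "\<dots> = 2 / (of_nat d + 1) - 1 / (of_nat d + 1)" unfolding pjk_sq[OF adm j] pjk_sum ..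
    also have "\<dots> = 1 / (of_nat d + 1)" by (simp add: diff_divide_distrib[symmetric])
    finally show "(\<Sum>k<d. cf \<alpha> j k * pjk d \<alpha> j k) = 1 / (of_nat d + 1)" .
  qed
  also have "\<dots> = 1"
  proof -
    have n2: "(of_nat d + 1 :: complex) \<noteq> 0"
      by (metis of_nat_Suc of_nat_eq_0_iff add.commute nat.simps(3))
    then show ?thesis by (simp add: field_simps)
  qed
  finally show ?thesis .
qed

end

theorem mainTheorem2:
  fixes d :: nat and \<alpha> :: "nat \<Rightarrow> nat \<Rightarrow> real"
  assumes "prime d" and "odd d"
    and "admissible_alpha d \<alpha>"
  defines "\<rho> \<equiv> rho d \<alpha>" and "p \<equiv> pjk d \<alpha>"
  shows "(hermitian_mat d \<rho> \<and> mtrace \<rho> = 1 \<and> mtrace (\<rho> * \<rho>) = 1) \<and>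
    (\<forall>j\<le>d. \<forall>k<d. mtrace (\<rho> * Proj d j k) = p j k) \<and>
    (\<forall>j\<le>d. (\<Sum>k<d. (p j k)\<^sup>2) = 2 / (of_nat d + 1)) \<and>
    (\<forall>j\<le>d. \<forall>r\<in>{1..d-1}. (\<Sum>k<d. p j k * p j ((k + r) mod d)) = 1 / (of_nat d + 1))"
proof -
  interpret odp d using assms(1,2) by unfold_locales
  have A: "hermitian_mat d \<rho> \<and> mtrace \<rho> = 1 \<and> mtrace (\<rho> * \<rho>) = 1"
    unfolding \<rho>_def using rho_herm[OF assms(3)] tr_rho tr_rho2[OF assms(3)] by simp
  have B: "\<forall>j\<le>d. \<forall>k<d. mtrace (\<rho> * Proj d j k) = p j k"
    unfolding \<rho>_def p_def using tr_rho_Proj by simp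
  have C: "\<forall>j\<le>d. (\<Sum>k<d. (p j k)\<^sup>2) = 2 / (of_nat d + 1)"
    unfolding p_def using pjk_sq[OF assms(3)] by (simp add: power2_eq_square)
  have D: "\<forall>j\<le>d. \<forall>r\<in>{1..d-1}. (\<Sum>k<d. p j k * p j ((k + r) mod d)) = 1 / (of_nat d + 1)"
  proof (intro allI impI ballI)
    fix j r assume j: "j \<le> d" and r: "r \<in> {1..d-1}"
    then have "r < d" "r \<noteq> 0" using dpos by auto
    then show "(\<Sum>k<d. p j k * p j ((k + r) mod d)) = 1 / (of_nat d + 1)"
      unfolding p_def using pjk_pair[OF assms(3) j \<open>r < d\<close>] by simp
  qed
  show ?thesis using A B C D by blast
qed



end
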